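(* There is no pure state $|\Phi\rangle\in\mathcal H_1\otimes\mathcal H_2\otimes\mathcal H_3\otimes\mathcal H_4$, $\mathcal H_i=\mathbb C^2$, whose Schmidt ranks satisfy simultaneously $\mathrm{Sch}\#^{3,4}_{1,2}(|\Phi\rangle)=4$, $\mathrm{Sch}\#^{1,3}_{2,4}(|\Phi\rangle)=2$ and $\mathrm{Sch}\#^{1,4}_{2,3}(|\Phi\rangle)=2$.
   Context: $\mathrm{Sch}\#^{S}_{T}(|\Phi\rangle)$ denotes the Schmidt rank of $|\Phi\rangle$ with respect to the bipartition of the four qubits into the set $S$ and its complement $T$ (number of nonzero Schmidt coefficients). *)

theory Defs
  imports "HOL-Analysis.Analysis"
begin

text \<open>A vector of four qubits (C^2 tensor C^2 tensor C^2 tensor C^2) is given by its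
  coefficients phi i1 i2 i3 i4 in the computational basis, each index ranging over
  the two-element type 2.\<close>

type_synonym qubit4 = "2 \<Rightarrow> 2 \<Rightarrow> 2 \<Rightarrow> 2 \<Rightarrow> complex"

definition pure_state4 :: "qubit4 \<Rightarrow> bool" where
  "pure_state4 phi \<longleftrightarrow> (\<Sum>i1\<in>UNIV. \<Sum>i2\<in>UNIV. \<Sum>i3\<in>UNIV. \<Sum>i4\<in>UNIV. (cmod (phi i1 i2 i3 i4))\<^sup>2) = 1"

text \<open>Schmidt rank across a bipartition = number of nonzero Schmidt coefficients
  = number of nonzero singular values of the coefficient matrix, i.e. its rank.
  Rows are indexed by the qubits of S, columns by those of the complement T.\<close>

definition sch_12_34 :: "qubit4 \<Rightarrow> nat" where
  "sch_12_34 phi = rank ((\<chi> r. \<chi> c. phi (fst r) (snd r) (fst c) (snd c)) :: complex^(2\<times>2)^(2\<times>2))"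

definition sch_13_24 :: "qubit4 \<Rightarrow> nat" where
  "sch_13_24 phi = rank ((\<chi> r. \<chi> c. phi (fst r) (fst c) (snd r) (snd c)) :: complex^(2\<times>2)^(2\<times>2))"

definition sch_14_23 :: "qubit4 \<Rightarrow> nat" where
  "sch_14_23 phi = rank ((\<chi> r. \<chi> c. phi (fst r) (fst c) (snd c) (snd r)) :: complex^(2\<times>2)^(2\<times>2))"

end

theory Submission
  imports Defs
begin

lemma det_4:
  fixes A :: "'a::comm_ring_1^(2\<times>2)^(2\<times>2)"
  defines "a \<equiv> (1::2,1::2)" and "b \<equiv> (1::2,2::2)" and "c \<equiv> (2::2,1::2)" and "d \<equiv> (2::2,2::2)"
  shows "det A = A$a$a * A$b$b * A$c$c * A$d$d - A$a$a * A$b$b * A$c$d * A$d$c - A$a$a * A$b$c * A$c$b * A$d$d + A$a$a * A$b$c * A$c$d * A$d$b + A$a$a * A$b$d * A$c$b * A$d$c - A$a$a * A$b$d * A$c$c * A$d$b - A$a$b * A$b$a * A$c$c * A$d$d + A$a$b * A$b$a * A$c$d * A$d$c + A$a$b * A$b$c * A$c$a * A$d$d - A$a$b * A$b$c * A$c$d * A$d$a - A$a$b * A$b$d * A$c$a * A$d$c + A$a$b * A$b$d * A$c$c * A$d$a + A$a$c * A$b$a * A$c$b * A$d$d - A$a$c * A$b$a * A$c$d * A$d$b - A$a$c * A$b$b * A$c$a * A$d$d + A$a$c * A$b$b * A$c$d * A$d$a + A$a$c * A$b$d * A$c$a * A$d$b - A$a$c * A$b$d * A$c$b * A$d$a - A$a$d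 * A$b$a * A$c$b * A$d$c + A$a$d * A$b$a * A$c$c * A$d$b + A$a$d * A$b$b * A$c$a * A$d$c - A$a$d * A$b$b * A$c$c * A$d$a - A$a$d * A$b$c * A$c$a * A$d$b + A$a$d * A$b$c * A$c$b * A$d$a"
proof -
  have f1: "finite {b,c,d}" "a \<notin> {b,c,d}" by (auto simp: a_def b_def c_def d_def)
  have f2: "finite {c,d}" "b \<notin> {c,d}" by (auto simp: a_def b_def c_def d_def)
  have f3: "finite {d}" "c \<notin> {d}" by (auto simp: a_def b_def c_def d_def)
  have U: "(UNIV :: (2\<times>2) set) = {a,b,c,d}" unfolding a_def b_def c_def d_def using exhaust_2 by fastforce
  have dist: "a \<noteq> b" "a \<noteq> c" "a \<noteq> d" "b \<noteq> c" "b \<noteq> d" "c \<noteq> d" "b \<noteq> a" "c \<noteq> a" "d \<noteq> a" "c \<noteq> b" "d \<noteq> b" "d \<noteq> c" by (auto simp: a_def b_def c_def d_def)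
  show ?thesis
    unfolding det_def U
    unfolding sum_over_permutations_insert[OF f1]
    unfolding sum_over_permutations_insert[OF f2]
    unfolding sum_over_permutations_insert[OF f3]
    unfolding permutes_sing
    by (simp add: sign_swap_id permutation_swap_id sign_compose permutation_compose dist algebra_simps)
qed
lemma key_identity:
  fixes x y u v :: "2 \<Rightarrow> 2 \<Rightarrow> complex"
  shows "det ((\<chi> r. \<chi> c. x (fst r) (fst c) * u (snd r) (snd c) + y (fst r) (fst c) * v (snd r) (snd c)) :: complex^(2\<times>2)^(2\<times>2))
       + det ((\<chi> r. \<chi> c. x (fst r) (snd c) * u (fst c) (snd r) + y (fst r) (snd c) * v (fst c) (snd r)) :: complex^(2\<times>2)^(2\<times>2)) = 0"
  unfolding det_4 by (simp; algebra)
lemma rank_full_iff_det: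
  fixes A :: "'a::field^'n^'n"
  shows "rank A = CARD('n) \<longleftrightarrow> det A \<noteq> 0"
proof -
  define f where "f = (\<lambda>i. row i A)"
  have rows: "rows A = range f" by (auto simp: rows_def f_def)
  have "rank A = CARD('n) \<longleftrightarrow> (\<forall>c. sum (\<lambda>i. c i *s f i) UNIV = 0 \<longrightarrow> (\<forall>i. c i = 0))"
  proof
    assume r: "rank A = CARD('n)"
    show "\<forall>c. sum (\<lambda>i. c i *s f i) UNIV = 0 \<longrightarrow> (\<forall>i. c i = 0)"
    proof (rule allI, rule impI, rule ccontr)
      fix c assume c: "sum (\<lambda>i. c i *s f i) UNIV = 0" and "\<not> (\<forall>i. c i = 0)"
      then obtain k where k: "c k \<noteq> 0" by blast
      have fU: "finite (UNIV::'n set)" by simp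
      have "f k = sum (\<lambda>j. (- c j / c k) *s f j) (UNIV - {k})"
      proof -
        have "c k *s f k + sum (\<lambda>j. c j *s f j) (UNIV - {k}) = 0"
          using c sum.remove[OF fU, of k "\<lambda>i. c i *s f i"] by simp
        then have "c k *s f k = - sum (\<lambda>j. c j *s f j) (UNIV - {k})"
          by (simp add: eq_neg_iff_add_eq_0)
        then have "f k = (1 / c k) *s (- sum (\<lambda>j. c j *s f j) (UNIV - {k}))"
          using k by (metis vector_smult_assoc divide_self_if vector_smult_lid times_divide_eq_left mult_1)
        also have "\<dots> = sum (\<lambda>j. (- c j / c k) *s f j) (UNIV - {k})"
          by (simp add: vec.scale_sum_right vector_smult_assoc vec.scale_minus_right sum_negf)
        finally show ?thesis .
      qed
      moreover have "sum (\<lambda>j. (- c j / c k) *s f j) (UNIV - {k}) \<in> vec.span (f ` (UNIV - {k}))"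
        by (intro vec.span_sum vec.span_scale vec.span_base) auto
      ultimately have "f k \<in> vec.span (f ` (UNIV - {k}))" by simp
      then have "range f \<subseteq> vec.span (f ` (UNIV - {k}))"
        by (auto intro: vec.span_base)
      then have "vec.dim (range f) \<le> card (f ` (UNIV - {k}))"
        by (intro vec.dim_le_card) auto
      also have "\<dots> \<le> card (UNIV - {k})" by (rule card_image_le) simp
      also have "\<dots> < CARD('n)" by (simp add: card_Diff_singleton)
      finally show False using r rows by (simp add: row_rank_def_gen)
    qed
  next
    assume I: "\<forall>c. sum (\<lambda>i. c i *s f i) UNIV = 0 \<longrightarrow> (\<forall>i. c i = 0)"
    have inj: "inj f"
    proof (rule injI, rule ccontr)
      fix i j assume e: "f i = f j" and ne: "i \<noteq> j"
      define c where "c = (\<lambda>k. if k = i then (1::'a) else if k = j then -1 else 0)"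
      have "sum (\<lambda>k. c k *s f k) UNIV = sum (\<lambda>k. c k *s f k) {i, j}"
        by (rule sum.mono_neutral_right) (auto simp: c_def)
      also have "\<dots> = 0" using ne e by (simp add: c_def)
      finally have "c i = 0" using I by blast
      then show False by (simp add: c_def)
    qed
    have ind: "vec.independent (range f)"
    proof
      assume "vec.dependent (range f)"
      then obtain u where u: "\<exists>v\<in>range f. u v \<noteq> 0" "(\<Sum>v\<in>range f. u v *s v) = 0"
        using vec.dependent_finite[of "range f"] by auto
      have "(\<Sum>v\<in>range f. u v *s v) = sum (\<lambda>i. u (f i) *s f i) UNIV"
        using sum.reindex[OF inj, of "\<lambda>v. u v *s v"] by simp
      then have "\<forall>i. u (f i) = 0" using I u(2) by metis
      then show False using u(1) by auto
    qed
    have "rank A = card (range f)"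
      unfolding row_rank_def_gen rows using vec.dim_eq_card_independent[OF ind] .
    also have "\<dots> = CARD('n)" using inj by (simp add: card_image)
    finally show "rank A = CARD('n)" .
  qed
  also have "\<dots> \<longleftrightarrow> invertible A"
    unfolding invertible_right_inverse matrix_right_invertible_independent_rows f_def ..
  also have "\<dots> \<longleftrightarrow> det A \<noteq> 0" by (rule invertible_det_nz)
  finally show ?thesis .
qed
lemma rank2_decomp:
  fixes K :: "'a::field^'n^'m"
  assumes "rank K = 2"
  shows "\<exists>u1 u2 p q. \<forall>i. row i K = p i *s u1 + q i *s u2"
proof -
  obtain B where B: "B \<subseteq> rows K" "vec.independent B" "rows K \<subseteq> vec.span B" "card B = vec.dim (rows K)"
    using vec.basis_exists[of "rows K"] by blast
  then have "card B = 2" using assms by (simp add: row_rank_def_gen)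
  then obtain u1 u2 where U: "B = {u1, u2}" by (auto simp: card_2_iff)
  have "\<forall>i. \<exists>p q. row i K = p *s u1 + q *s u2"
  proof
    fix i
    have "row i K \<in> vec.span {u1, u2}" using B(3) U by (auto simp: rows_def)
    then obtain p where "row i K - p *s u1 \<in> vec.span {u2}" by (auto simp: vec.span_insert)
    then obtain q where "row i K - p *s u1 = q *s u2" by (auto simp: vec.span_singleton)
    then have "row i K = p *s u1 + q *s u2" by (simp add: algebra_simps)
    then show "\<exists>p q. row i K = p *s u1 + q *s u2" by blast
  qed
  then show ?thesis by metis
qed

theorem mainTheorem8:
  shows "\<not> (\<exists>phi :: qubit4. pure_state4 phi \<and> sch_12_34 phi = 4 \<and> sch_13_24 phi = 2 \<and> sch_14_23 phi = 2)"
proof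
  assume "\<exists>phi :: qubit4. pure_state4 phi \<and> sch_12_34 phi = 4 \<and> sch_13_24 phi = 2 \<and> sch_14_23 phi = 2"
  then obtain phi :: qubit4 where h: "sch_12_34 phi = 4" "sch_13_24 phi = 2" "sch_14_23 phi = 2" by blast
  define K where "K = ((\<chi> r. \<chi> c. phi (fst r) (fst c) (snd r) (snd c)) :: complex^(2\<times>2)^(2\<times>2))"
  obtain u1 u2 p q where d: "\<forall>i. row i K = p i *s u1 + q i *s u2"
    using rank2_decomp[of K] h(2) unfolding sch_13_24_def K_def by blast
  have phi_eq: "phi i1 i2 i3 i4 = p (i1,i3) * u1 $ (i2,i4) + q (i1,i3) * u2 $ (i2,i4)" for i1 i2 i3 i4
  proof -
    have "phi i1 i2 i3 i4 = row (i1,i3) K $ (i2,i4)" by (simp add: K_def row_def)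
    also have "\<dots> = p (i1,i3) * u1 $ (i2,i4) + q (i1,i3) * u2 $ (i2,i4)" using d by simp
    finally show ?thesis .
  qed
  define x where "x = (\<lambda>a b. p (a,b))"
  define y where "y = (\<lambda>a b. q (a,b))"
  define u where "u = (\<lambda>a b. u1 $ (a,b))"
  define v where "v = (\<lambda>a b. u2 $ (a,b))"
  have M: "((\<chi> r. \<chi> c. phi (fst r) (snd r) (fst c) (snd c)) :: complex^(2\<times>2)^(2\<times>2))
     = (\<chi> r. \<chi> c. x (fst r) (fst c) * u (snd r) (snd c) + y (fst r) (fst c) * v (snd r) (snd c))"
    by (simp add: phi_eq x_def y_def u_def v_def)
  have N: "((\<chi> r. \<chi> c. phi (fst r) (fst c) (snd c) (snd r)) :: complex^(2\<times>2)^(2\<times>2))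
     = (\<chi> r. \<chi> c. x (fst r) (snd c) * u (fst c) (snd r) + y (fst r) (snd c) * v (fst c) (snd r))"
    by (simp add: phi_eq x_def y_def u_def v_def)
  have c4: "CARD(2\<times>2) = 4" by simp
  have "det ((\<chi> r. \<chi> c. phi (fst r) (fst c) (snd c) (snd r)) :: complex^(2\<times>2)^(2\<times>2)) = 0"
    using h(3) rank_full_iff_det[of "(\<chi> r. \<chi> c. phi (fst r) (fst c) (snd c) (snd r)) :: complex^(2\<times>2)^(2\<times>2)"] c4 unfolding sch_14_23_def by simp
  then have "det ((\<chi> r. \<chi> c. phi (fst r) (snd r) (fst c) (snd c)) :: complex^(2\<times>2)^(2\<times>2)) = 0"
    using key_identity[of x u y v] unfolding M N by simp
  then show False
    using h(1) rank_full_iff_det[of "(\<chi> r. \<chi> c. phi (fst r) (snd r) (fst c) (snd c)) :: complex^(2\<times>2)^(2\<times>2)"] c4 unfolding sch_12_34_def by simp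
qed

end
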